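(* Let $X=(X_0,X_1,\dots)$ be a Markov chain on $[0,\infty)$ with transition kernel $T(\cdot\mid x)$ such that $\int_0^\infty|y-x|^3T(dy\mid x)<\infty$ for all $x\ge0$, and let $\mu_k(x)=\int_0^\infty(y-x)^kT(dy\mid x)$ for $k=1,2,3$. Assume $\mu_2(x)>0$ for all sufficiently large $x$. Assume there is a function $\psi_1$ such that for all sufficiently large $x$, $\mu_1(x)\le\frac{\mu_2(x)}{2x}[1+\psi_1(x)]$, and $\lim_{x\to\infty}(\log x)\psi_1(x)=0$. Assume also $\lim_{x\to\infty}\frac{\log x}{x}\frac{\mu_3(x)}{\mu_2(x)}=0$. Then the function $f_0(x)=\log(\log(e+x))$, $x\ge0$, is superharmonic on $[m,\infty)$ for all $m$ large enough, i.e. there is $m$ such that $\int_0^\infty f_0(y)T(dy\mid x)\le f_0(x)$ for all $x\ge m$. *)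

theory Defs
  imports "HOL-Probability.Probability"
begin

definition transition_kernel_nonneg :: "(real \<Rightarrow> real measure) \<Rightarrow> bool" where
  "transition_kernel_nonneg T \<longleftrightarrow>
     (\<forall>x\<ge>0. prob_space (T x) \<and> sets (T x) = sets borel \<and> (AE y in T x. 0 \<le> y))"

definition mu :: "(real \<Rightarrow> real measure) \<Rightarrow> nat \<Rightarrow> real \<Rightarrow> real" where
  "mu T k x = (\<integral>y. (y - x) ^ k \<partial>T x)"

definition f0 :: "real \<Rightarrow> real" where
  "f0 x = ln (ln (exp 1 + x))"

end

theory Submission
  imports Defs "HOL-Real_Asymp.Real_Asymp"
begin



fun gg :: "nat \<Rightarrow> real \<Rightarrow> real" where
  "gg 0 u = ln (ln u)"
| "gg (Suc 0) u = 1 / (u * ln u)"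
| "gg (Suc (Suc 0)) u = - (ln u + 1) / (u^2 * ln u^2)"
| "gg (Suc (Suc (Suc 0))) u = (2 * ln u^2 + 3 * ln u + 2) / (u^3 * ln u^3)"
| "gg _ u = - (6 * ln u^3 + 11 * ln u^2 + 12 * ln u + 6) / (u^4 * ln u^4)"

lemma gg_deriv:
  assumes "m < 4" "(u::real) > 1"
  shows "(gg m has_real_derivative gg (Suc m) u) (at u)"
proof -
  have u: "u > 0" using assms by simp
  have L: "ln u > 0" using assms by simp
  have "m = 0 \<or> m = Suc 0 \<or> m = Suc (Suc 0) \<or> m = Suc (Suc (Suc 0))" using assms(1) by auto
  moreover have "(gg 0 has_real_derivative gg (Suc 0) u) (at u)"
    unfolding gg.simps
    using u L by (auto intro!: derivative_eq_intros simp: field_simps)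
  moreover have "(gg (Suc 0) has_real_derivative gg (Suc (Suc 0)) u) (at u)"
  proof -
    have e3: "gg (Suc 0) = (\<lambda>u. 1 / (u * ln u))"
      by (simp add: fun_eq_iff)
    show ?thesis unfolding e3 gg.simps
    using u L by (auto intro!: derivative_eq_intros simp: field_simps power2_eq_square)
  qed
  moreover have "(gg (Suc (Suc 0)) has_real_derivative gg (Suc (Suc (Suc 0))) u) (at u)"
  proof -
    have e3: "gg (Suc (Suc 0)) = (\<lambda>u. - (ln u + 1) / (u^2 * ln u^2))"
      by (simp add: fun_eq_iff)
    show ?thesis unfolding e3 gg.simps
    using u L by (auto intro!: derivative_eq_intros simp: field_simps power2_eq_square power3_eq_cube)
  qed
  moreover have "(gg (Suc (Suc (Suc 0))) has_real_derivative gg (Suc (Suc (Suc (Suc 0)))) u) (at u)"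
  proof -
    have e3: "gg (Suc (Suc (Suc 0))) = (\<lambda>u. (2 * ln u^2 + 3 * ln u + 2) / (u^3 * ln u^3))"
      by (simp add: fun_eq_iff)
    show ?thesis unfolding e3 gg.simps
    using u L by (auto intro!: derivative_eq_intros simp: field_simps eval_nat_numeral)
  qed
  ultimately show ?thesis by (elim disjE) (simp_all del: gg.simps)
qed


lemma gg4_neg: "(u::real) > 1 \<Longrightarrow> gg 4 u \<le> 0"
proof -
  assume u: "u > 1"
  hence L: "ln u > 0" by simp
  have "gg 4 u = - (6 * ln u^3 + 11 * ln u^2 + 12 * ln u + 6) / (u^4 * ln u^4)"
    by (simp add: eval_nat_numeral)
  also have "\<dots> \<le> 0" using u L by (intro divide_nonpos_pos) (auto intro!: add_nonneg_nonneg simp del: minus_add_distrib)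
  finally show ?thesis .
qed

lemma taylor_bound:
  fixes x y :: real
  assumes x: "x \<ge> 0" and y: "y \<ge> 0"
  shows "f0 y \<le> f0 x + gg 1 (exp 1 + x) * (y - x) + gg 2 (exp 1 + x) / 2 * (y - x)^2
                 + gg 3 (exp 1 + x) / 6 * (y - x)^3"
proof (cases "y = x")
  case True thus ?thesis by simp
next
  case False
  have u1: "\<And>t::real. t \<ge> 0 \<Longrightarrow> exp 1 + t > 1"
    by (smt (verit) one_less_exp_iff)
  have D: "\<forall>(m::nat) (t::real). m < 4 \<and> 0 \<le> t \<and> t \<le> max x y \<longrightarrow>
     ((\<lambda>t. gg m (exp 1 + t)) has_real_derivative gg (Suc m) (exp 1 + t)) (at t)"
  proof (intro allI impI)
    fix m :: nat and t :: real assume h: "m < 4 \<and> 0 \<le> t \<and> t \<le> max x y"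
    have "(gg m has_real_derivative gg (Suc m) (exp 1 + t)) (at (exp 1 + t))"
      using gg_deriv h u1 by blast
    have "((\<lambda>t. exp 1 + t) has_real_derivative 1) (at t)"
      by (auto intro!: derivative_eq_intros)
    from DERIV_chain2[where f="gg m" and g="\<lambda>t. exp 1 + t", OF \<open>(gg m has_real_derivative _) _\<close> this]
    show "((\<lambda>t. gg m (exp 1 + t)) has_real_derivative gg (Suc m) (exp 1 + t)) (at t)"
      by simp
  qed
  have I: "(\<lambda>m t. gg m (exp 1 + t)) 0 = f0" by (simp add: fun_eq_iff f0_def)
  obtain t where t: "(if y < x then y < t \<and> t < x else x < t \<and> t < y)"
    and eq: "f0 y = (\<Sum>m<4. (gg m (exp 1 + x) / fact m) * (y - x)^m) + (gg 4 (exp 1 + t) / fact 4) * (y - x)^4"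
    using Taylor[of 4 "\<lambda>m t. gg m (exp 1 + t)" f0 0 "max x y" x y, OF _ I D] x y False by auto
  have t0: "t \<ge> 0" using t x y by (auto split: if_splits)
  have "gg 4 (exp 1 + t) / fact 4 * (y - x)^4 \<le> 0"
    using gg4_neg[OF u1[OF t0]] by (intro mult_nonpos_nonneg divide_nonpos_pos) auto
  hence "f0 y \<le> (\<Sum>m<4. (gg m (exp 1 + x) / fact m) * (y - x)^m)" using eq by linarith
  also have "\<dots> = f0 x + gg 1 (exp 1 + x) * (y - x) + gg 2 (exp 1 + x) / 2 * (y - x)^2
                 + gg 3 (exp 1 + x) / 6 * (y - x)^3"
    by (simp add: eval_nat_numeral f0_def)
  finally show ?thesis .
qed


definition EE :: "(real \<Rightarrow> real) \<Rightarrow> (real \<Rightarrow> real) \<Rightarrow> real \<Rightarrow> real" where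
  "EE \<psi> r x = ln (exp 1 + x) * \<psi> x + ln (exp 1 + x) * (exp 1 / x)
     + (ln (exp 1 + x) * \<psi> x) * (exp 1 / x)
     + r x * (2 * ln (exp 1 + x)^2 + 3 * ln (exp 1 + x) + 2) / (3 * (exp 1 + x) * ln (exp 1 + x))"

lemma EE_lim:
  assumes psi: "((\<lambda>x. ln x * \<psi> x) \<longlongrightarrow> 0) at_top"
    and r: "((\<lambda>x. ln x / x * r x) \<longlongrightarrow> 0) at_top"
  shows "(EE \<psi> r \<longlongrightarrow> 0) at_top"
proof -
  have h1: "((\<lambda>x::real. ln (exp 1 + x) / ln x) \<longlongrightarrow> 1) at_top" by real_asymp
  have ev1: "eventually (\<lambda>x::real. x > 1) at_top" by (rule eventually_gt_at_top)
  have h2: "((\<lambda>x. ln (exp 1 + x) * \<psi> x) \<longlongrightarrow> 0) at_top"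
  proof -
    have "((\<lambda>x. ln (exp 1 + x) / ln x * (ln x * \<psi> x)) \<longlongrightarrow> 1 * 0) at_top"
      by (rule tendsto_mult[OF h1 psi])
    moreover have "eventually (\<lambda>x. ln (exp 1 + x) / ln x * (ln x * \<psi> x) = ln (exp 1 + x) * \<psi> x) at_top"
      using ev1 by eventually_elim simp
    ultimately show ?thesis by (simp add: tendsto_cong)
  qed
  have h3: "((\<lambda>x::real. ln (exp 1 + x) * (exp 1 / x)) \<longlongrightarrow> 0) at_top" by real_asymp
  have h3b: "((\<lambda>x::real. exp 1 / x) \<longlongrightarrow> 0) at_top" by real_asymp
  have h5: "((\<lambda>x::real. x * (2 * ln (exp 1 + x)^2 + 3 * ln (exp 1 + x) + 2) / (3 * (exp 1 + x) * ln (exp 1 + x) * ln x)) \<longlongrightarrow> 2/3) at_top"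
    by real_asymp
  have h6: "((\<lambda>x. r x * (2 * ln (exp 1 + x)^2 + 3 * ln (exp 1 + x) + 2) / (3 * (exp 1 + x) * ln (exp 1 + x))) \<longlongrightarrow> 0) at_top"
  proof -
    have "((\<lambda>x. (ln x / x * r x) * (x * (2 * ln (exp 1 + x)^2 + 3 * ln (exp 1 + x) + 2) / (3 * (exp 1 + x) * ln (exp 1 + x) * ln x))) \<longlongrightarrow> 0 * (2/3)) at_top"
      by (rule tendsto_mult[OF r h5])
    moreover have "eventually (\<lambda>x. (ln x / x * r x) * (x * (2 * ln (exp 1 + x)^2 + 3 * ln (exp 1 + x) + 2) / (3 * (exp 1 + x) * ln (exp 1 + x) * ln x))
       = r x * (2 * ln (exp 1 + x)^2 + 3 * ln (exp 1 + x) + 2) / (3 * (exp 1 + x) * ln (exp 1 + x))) at_top"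
      using ev1 by eventually_elim simp
    ultimately show ?thesis by (simp add: tendsto_cong)
  qed
  have "(EE \<psi> r \<longlongrightarrow> 0 + 0 + 0 * 0 + 0) at_top"
    unfolding EE_def[abs_def]
    by (intro tendsto_add tendsto_mult h2 h3 h3b h6)
  thus ?thesis by simp
qed


lemma alg_identity:
  fixes x m2 m3 p u L :: real
  assumes x: "x > 0" and m2: "m2 > 0" and u: "u > 0" and L: "L > 0" and ux: "u = exp 1 + x"
  shows "1 / (u * L) * (m2 / (2 * x) * (1 + p)) + (- (L + 1) / (u^2 * L^2)) / 2 * m2
         + ((2 * L^2 + 3 * L + 2) / (u^3 * L^3)) / 6 * m3
       = m2 / (2 * u^2 * L^2) * ((L * p + L * (exp 1 / x) + (L * p) * (exp 1 / x)
          + (m3 / m2) * (2 * L^2 + 3 * L + 2) / (3 * u * L)) - 1)"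
proof -
  have e: "exp 1 = u - x" using ux by simp
  show ?thesis unfolding e using x m2 u L
    by (simp add: field_simps power2_eq_square power3_eq_cube) (simp add: algebra_simps)?
qed

lemma drift_alg:
  fixes x m1 m2 m3 p :: real
  assumes x: "x > 0" and m2: "m2 > 0" and d: "m1 \<le> m2 / (2 * x) * (1 + p)"
    and E: "EE (\<lambda>_. p) (\<lambda>_. m3 / m2) x < 1"
  shows "gg 1 (exp 1 + x) * m1 + gg 2 (exp 1 + x) / 2 * m2 + gg 3 (exp 1 + x) / 6 * m3 \<le> 0"
proof -
  define u where "u = exp 1 + x"
  define L where "L = ln u"
  have u1: "u > 1" unfolding u_def using x by (smt (verit) one_less_exp_iff)
  hence u0: "u > 0" and L0: "L > 0" unfolding L_def by auto
  have g1: "gg 1 u = 1 / (u * L)" by (simp add: L_def)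
  have g2: "gg 2 u = - (L + 1) / (u^2 * L^2)" by (simp add: L_def eval_nat_numeral)
  have g3: "gg 3 u = (2 * L^2 + 3 * L + 2) / (u^3 * L^3)" by (simp add: L_def eval_nat_numeral)
  have "1 / (u * L) * m1 \<le> 1 / (u * L) * (m2 / (2 * x) * (1 + p))"
    using d u0 L0 by (intro mult_left_mono) auto
  hence "gg 1 u * m1 + gg 2 u / 2 * m2 + gg 3 u / 6 * m3 \<le>
     1 / (u * L) * (m2 / (2 * x) * (1 + p)) + (- (L + 1) / (u^2 * L^2)) / 2 * m2
         + ((2 * L^2 + 3 * L + 2) / (u^3 * L^3)) / 6 * m3" unfolding g1 g2 g3 by linarith
  also have "\<dots> = m2 / (2 * u^2 * L^2) * ((L * p + L * (exp 1 / x) + (L * p) * (exp 1 / x)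
          + (m3 / m2) * (2 * L^2 + 3 * L + 2) / (3 * u * L)) - 1)"
    by (rule alg_identity[OF x m2 u0 L0 u_def])
  also have "\<dots> \<le> 0"
  proof (rule mult_nonneg_nonpos)
    show "0 \<le> m2 / (2 * u^2 * L^2)" using m2 by simp
    show "(L * p + L * (exp 1 / x) + (L * p) * (exp 1 / x)
          + (m3 / m2) * (2 * L^2 + 3 * L + 2) / (3 * u * L)) - 1 \<le> 0"
      using E unfolding EE_def u_def L_def by (simp add: mult.assoc)
  qed
  finally show ?thesis unfolding u_def .
qed


lemma ln_pos_aux: "(t::real) \<ge> 0 \<Longrightarrow> ln (exp 1 + t) \<ge> 1"
  by (metis add_0_right add_le_cancel_left exp_gt_zero ln_exp ln_le_cancel_iff add_pos_nonneg)

lemma pow_le_cube: "\<bar>(d::real) ^ k\<bar> \<le> 1 + \<bar>d\<bar> ^ 3" if "k \<le> 3" for d k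
proof (cases "\<bar>d\<bar> \<le> 1")
  case True
  have "\<bar>d ^ k\<bar> = \<bar>d\<bar> ^ k" by (simp add: power_abs)
  also have "\<dots> \<le> 1" using True by (simp add: power_le_one)
  finally show ?thesis by (smt (verit) zero_le_power abs_ge_zero)
next
  case False
  have "\<bar>d ^ k\<bar> = \<bar>d\<bar> ^ k" by (simp add: power_abs)
  also have "\<dots> \<le> \<bar>d\<bar> ^ 3" using False that by (intro power_increasing) auto
  finally show ?thesis by simp
qed

theorem theorem4p4:
  fixes T :: "real \<Rightarrow> real measure" and \<psi>1 :: "real \<Rightarrow> real"
  assumes kernel: "transition_kernel_nonneg T"
    and moment3: "\<forall>x\<ge>0. integrable (T x) (\<lambda>y. \<bar>y - x\<bar> ^ 3)"
    and mu2_pos: "eventually (\<lambda>x. mu T 2 x > 0) at_top"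
    and drift: "eventually (\<lambda>x. mu T 1 x \<le> mu T 2 x / (2 * x) * (1 + \<psi>1 x)) at_top"
    and psi1_lim: "((\<lambda>x. ln x * \<psi>1 x) \<longlongrightarrow> 0) at_top"
    and mu3_lim: "((\<lambda>x. ln x / x * (mu T 3 x / mu T 2 x)) \<longlongrightarrow> 0) at_top"
  shows "\<exists>m. \<forall>x\<ge>m. (\<integral>y. f0 y \<partial>T x) \<le> f0 x"
proof -
  have "(EE \<psi>1 (\<lambda>x. mu T 3 x / mu T 2 x) \<longlongrightarrow> 0) at_top"
    using EE_lim[OF psi1_lim mu3_lim] .
  hence evE: "eventually (\<lambda>x. EE \<psi>1 (\<lambda>x. mu T 3 x / mu T 2 x) x < 1) at_top"
    by (rule order_tendstoD) simp
  have "eventually (\<lambda>x. mu T 2 x > 0 \<and> mu T 1 x \<le> mu T 2 x / (2 * x) * (1 + \<psi>1 x)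
      \<and> EE \<psi>1 (\<lambda>x. mu T 3 x / mu T 2 x) x < 1 \<and> x > 0) at_top"
    using mu2_pos drift evE eventually_gt_at_top[of 0] by eventually_elim auto
  then obtain M where M: "\<And>x. x \<ge> M \<Longrightarrow> mu T 2 x > 0 \<and> mu T 1 x \<le> mu T 2 x / (2 * x) * (1 + \<psi>1 x)
      \<and> EE \<psi>1 (\<lambda>x. mu T 3 x / mu T 2 x) x < 1 \<and> x > 0"
    by (auto simp: eventually_at_top_linorder)
  show ?thesis
  proof (intro exI allI impI)
    fix x assume "M \<le> x"
    note Mx = M[OF this]
    have x0: "x > 0" using Mx by simp
    interpret prob_space "T x" using kernel x0 by (auto simp: transition_kernel_nonneg_def)
    have sets: "sets (T x) = sets borel" using kernel x0 by (auto simp: transition_kernel_nonneg_def)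
    have AEpos: "AE y in T x. 0 \<le> y" using kernel x0 by (auto simp: transition_kernel_nonneg_def)
    have meas: "\<And>g. g \<in> borel_measurable borel \<Longrightarrow> g \<in> borel_measurable (T x)"
      using measurable_cong_sets[OF sets refl, of borel] by blast
    have int3: "integrable (T x) (\<lambda>y. \<bar>y - x\<bar> ^ 3)" using moment3 x0 by simp
    have intk: "integrable (T x) (\<lambda>y. (y - x) ^ k)" if "k \<le> 3" for k
    proof (rule Bochner_Integration.integrable_bound[where M="T x" and f="\<lambda>y. 1 + \<bar>y - x\<bar> ^ 3"])
      show "integrable (T x) (\<lambda>y. 1 + \<bar>y - x\<bar> ^ 3)" using int3 by simp
      show "(\<lambda>y. (y - x) ^ k) \<in> borel_measurable (T x)" by (intro meas) measurable
      show "AE y in T x. norm ((y - x) ^ k) \<le> norm (1 + \<bar>y - x\<bar> ^ 3)"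
        using pow_le_cube[OF that] by simp
    qed
    define a1 where "a1 = gg 1 (exp 1 + x)"
    define a2 where "a2 = gg 2 (exp 1 + x)"
    define a3 where "a3 = gg 3 (exp 1 + x)"
    have f0x: "f0 x \<ge> 0"
      unfolding f0_def using ln_pos_aux[of x] x0 by simp
    show "(\<integral>y. f0 y \<partial>T x) \<le> f0 x"
    proof (cases "integrable (T x) f0")
      case False
      thus ?thesis using f0x by (simp add: not_integrable_integral_eq)
    next
      case True
      have ip: "integrable (T x) (\<lambda>y. f0 x + a1 * (y - x) + a2 / 2 * (y - x)^2 + a3 / 6 * (y - x)^3)"
        using intk[of 1] intk[of 2] intk[of 3] by simp
      have "(\<integral>y. f0 y \<partial>T x) \<le> (\<integral>y. f0 x + a1 * (y - x) + a2 / 2 * (y - x)^2 + a3 / 6 * (y - x)^3 \<partial>T x)"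
      proof (rule integral_mono_AE[OF True ip])
        show "AE y in T x. f0 y \<le> f0 x + a1 * (y - x) + a2 / 2 * (y - x)^2 + a3 / 6 * (y - x)^3"
          using AEpos by eventually_elim (use taylor_bound x0 a1_def a2_def a3_def in auto)
      qed
      also have "\<dots> = f0 x + a1 * mu T 1 x + a2 / 2 * mu T 2 x + a3 / 6 * mu T 3 x"
        using intk[of 1] intk[of 2] intk[of 3] prob_space unfolding mu_def by simp
      also have "\<dots> \<le> f0 x"
      proof -
        have "a1 * mu T 1 x + a2 / 2 * mu T 2 x + a3 / 6 * mu T 3 x \<le> 0"
          unfolding a1_def a2_def a3_def
          by (rule drift_alg[of x "mu T 2 x" "mu T 1 x" "\<psi>1 x"]) (use Mx in \<open>auto simp: EE_def\<close>)
        thus ?thesis by linarith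
      qed
      finally show ?thesis .
    qed
  qed
qed

end
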